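(* Let $C$, $\mathbb{P}^3_{\omega+}$ and $W'=Sec(C)\cap\mathbb{P}^3_{\omega+}$ be as below. For each partition $\{w_1,\dots,w_6\}=\{w_i,w_j,w_k\}\sqcup\{w_l,w_m,w_n\}$ of the Weierstrass points into two triples, let $\mathbb{P}^2_{ijk}$ (resp. $\mathbb{P}^2_{lmn}$) be the plane of $\mathbb{P}^3_{\omega+}$ spanned by $w_i,w_j,w_k$ (resp. $w_l,w_m,w_n$) and $\mathbb{P}^1_{ijk}=\mathbb{P}^2_{ijk}\cap\mathbb{P}^2_{lmn}$. Then each of these $10$ lines $\mathbb{P}^1_{ijk}$ is contained in $W'$.
   Context: $C$ is a smooth complex projective genus 2 curve with canonical bundle $\omega$, hyperelliptic involution $\lambda$ and Weierstrass points $w_1,\dots,w_6$, embedded in $\mathbb{P}^4_\omega=\mathbb{P}(H^0(C,\omega^3)^* )$ by $|\omega^3|$. $\lambda$ is linearized on $\omega$ acting as the identity on fibres over Weierstrass points; $H^0(C,\omega^3)_\pm$ are the eigenspaces (dimensions 4 and 1), and $\mathbb{P}^3_{\omega+}=\mathbb{P}(H^0(C,\omega^3)_+^* )\subset\mathbb{P}^4_\omega$ is the hyperplane annihilating $H^0(C,\omega^3)_-$; one has $C\cap\mathbb{P}^3_{\omega+}=\{w_1,\dots,w_6\}$. $Sec(C)$ is the secant variety of $C\subset\mathbb{P}^4_\omega$. *)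

theory Defs
  imports "HOL-Analysis.Analysis"
begin

text \<open>Concrete model: a smooth genus 2 curve C over the complex numbers is given by
  y^2 = F(x,z), F a binary sextic form with nonzero coefficient vector and no repeated
  root (equivalently: the curve is smooth), sitting in weighted projective space
  P(1,3,1).  H^0(C, omega^3) has basis z^3, x z^2, x^2 z, x^3, y (times (dx/y)^3),
  the first four spanning the lambda-invariant part and y the anti-invariant part.
  Points of P^4 are represented by their affine cones in complex^5.\<close>

definition sext :: "(nat \<Rightarrow> complex) \<Rightarrow> complex \<Rightarrow> complex \<Rightarrow> complex" where
  "sext a x z = (\<Sum>i\<le>6. a i * x ^ i * z ^ (6 - i))"

definition sext_dx :: "(nat \<Rightarrow> complex) \<Rightarrow> complex \<Rightarrow> complex \<Rightarrow> complex" where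
  "sext_dx a x z = (\<Sum>i\<le>6. of_nat i * a i * x ^ (i - 1) * z ^ (6 - i))"

definition sext_dz :: "(nat \<Rightarrow> complex) \<Rightarrow> complex \<Rightarrow> complex \<Rightarrow> complex" where
  "sext_dz a x z = (\<Sum>i\<le>6. of_nat (6 - i) * a i * x ^ i * z ^ (5 - i))"

definition genus2_coeffs :: "(nat \<Rightarrow> complex) \<Rightarrow> bool" where
  "genus2_coeffs a \<longleftrightarrow> (\<exists>i\<le>6. a i \<noteq> 0) \<and>
     (\<forall>x z. (x, z) \<noteq> (0, 0) \<and> sext a x z = 0 \<longrightarrow> sext_dx a x z \<noteq> 0 \<or> sext_dz a x z \<noteq> 0)"

definition emb :: "complex \<Rightarrow> complex \<Rightarrow> complex \<Rightarrow> complex ^ 5" where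
  "emb x z y = vector [z ^ 3, x * z ^ 2, x ^ 2 * z, x ^ 3, y]"

definition curve_cone :: "(nat \<Rightarrow> complex) \<Rightarrow> (complex ^ 5) set" where
  "curve_cone a = {emb x z y | x z y. y ^ 2 = sext a x z}"

text \<open>Affine cone over Sec(C): closure (classical = Zariski for this constructible cone)
  of the union of all secant lines.\<close>
definition sec_cone :: "(nat \<Rightarrow> complex) \<Rightarrow> (complex ^ 5) set" where
  "sec_cone a = closure {u + v | u v. u \<in> curve_cone a \<and> v \<in> curve_cone a}"

text \<open>Cone over P^3_{omega+}: annihilator of the anti-invariant section y.\<close>
definition plus_hyperplane :: "(complex ^ 5) set" where
  "plus_hyperplane = {v. v $ 5 = 0}"

definition W' :: "(nat \<Rightarrow> complex) \<Rightarrow> (complex ^ 5) set" where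
  "W' a = sec_cone a \<inter> plus_hyperplane"

text \<open>Nonzero representative of a Weierstrass point (point of C in P^3_{omega+}).\<close>
definition weierstrass_vec :: "(nat \<Rightarrow> complex) \<Rightarrow> complex ^ 5 \<Rightarrow> bool" where
  "weierstrass_vec a v \<longleftrightarrow> v \<in> curve_cone a \<and> v \<noteq> 0 \<and> v \<in> plus_hyperplane"

definition proj_distinct :: "complex ^ 5 \<Rightarrow> complex ^ 5 \<Rightarrow> bool" where
  "proj_distinct u v \<longleftrightarrow> (\<forall>c::complex. u \<noteq> c *s v)"

definition cspan3 :: "complex ^ 5 \<Rightarrow> complex ^ 5 \<Rightarrow> complex ^ 5 \<Rightarrow> (complex ^ 5) set" where
  "cspan3 u v w = {c1 *s u + c2 *s v + c3 *s w | c1 c2 c3. True}"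

end

theory Submission
  imports Defs "HOL-Computational_Algebra.Polynomial"
begin

definition is_form :: "nat \<Rightarrow> (complex \<Rightarrow> complex \<Rightarrow> complex) \<Rightarrow> bool" where
  "is_form n f \<longleftrightarrow> (\<exists>b. \<forall>x z. f x z = (\<Sum>i\<le>n. b i * x^i * z^(n-i)))"

lemma is_form_monom: "k \<le> n \<Longrightarrow> is_form n (\<lambda>x z. c * x^k * z^(n-k))"
  unfolding is_form_def
proof (rule exI[of _ "\<lambda>i. if i = k then c else 0"], intro allI impI)
  fix x z :: complex assume k: "k \<le> n"
  have "(\<Sum>i\<le>n. (if i = k then c else 0) * x^i * z^(n-i)) = (\<Sum>i\<le>n. if i = k then c * x^i * z^(n-i) else 0)"
    by (rule sum.cong) auto
  also have "\<dots> = c * x^k * z^(n-k)" using k by (simp add: sum.delta)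
  finally show "c * x^k * z^(n-k) = (\<Sum>i\<le>n. (if i = k then c else 0) * x^i * z^(n-i))" by simp
qed

lemma is_form_zero: "is_form n (\<lambda>x z. 0)"
  unfolding is_form_def by (rule exI[of _ "\<lambda>i. 0"]) simp

lemma is_form_add: "is_form n f \<Longrightarrow> is_form n g \<Longrightarrow> is_form n (\<lambda>x z. f x z + g x z)"
  unfolding is_form_def
proof (elim exE)
  fix b c assume b: "\<forall>x z. f x z = (\<Sum>i\<le>n. b i * x^i * z^(n-i))"
    and c: "\<forall>x z. g x z = (\<Sum>i\<le>n. c i * x^i * z^(n-i))"
  show "\<exists>d. \<forall>x z. f x z + g x z = (\<Sum>i\<le>n. d i * x^i * z^(n-i))"
    by (rule exI[of _ "\<lambda>i. b i + c i"]) (simp add: b c sum.distrib distrib_right)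
qed

lemma is_form_scale: "is_form n f \<Longrightarrow> is_form n (\<lambda>x z. c * f x z)"
  unfolding is_form_def
proof (elim exE)
  fix b assume b: "\<forall>x z. f x z = (\<Sum>i\<le>n. b i * x^i * z^(n-i))"
  show "\<exists>d. \<forall>x z. c * f x z = (\<Sum>i\<le>n. d i * x^i * z^(n-i))"
    by (rule exI[of _ "\<lambda>i. c * b i"]) (simp add: b sum_distrib_left mult.assoc)
qed

lemma is_form_sum: "finite A \<Longrightarrow> (\<forall>j\<in>A. is_form n (F j)) \<Longrightarrow> is_form n (\<lambda>x z. \<Sum>j\<in>A. F j x z)"
proof (induction A rule: finite_induct)
  case empty then show ?case by (simp add: is_form_zero)
next
  case (insert a A)
  then show ?case using is_form_add[of n "F a" "\<lambda>x z. \<Sum>j\<in>A. F j x z"] by simp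
qed

lemma is_form_swap: "is_form n f \<Longrightarrow> is_form n (\<lambda>x z. f z x)"
  unfolding is_form_def
proof (elim exE)
  fix b assume b: "\<forall>x z. f x z = (\<Sum>i\<le>n. b i * x^i * z^(n-i))"
  have "(\<Sum>i\<le>n. b i * z^i * x^(n-i)) = (\<Sum>i\<le>n. b (n - i) * x^i * z^(n-i))" for x z
  proof -
    have "(\<Sum>i\<le>n. b i * z^i * x^(n-i)) = (\<Sum>i\<le>n. b (n - i) * z^(n-i) * x^(n-(n-i)))"
      using sum.atLeastAtMost_rev[of "\<lambda>i. b i * z^i * x^(n-i)" 0 n] by (simp add: atMost_atLeast0)
    also have "\<dots> = (\<Sum>i\<le>n. b (n - i) * x^i * z^(n-i))"
      by (rule sum.cong) auto
    finally show ?thesis .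
  qed
  then show "\<exists>d. \<forall>x z. f z x = (\<Sum>i\<le>n. d i * x^i * z^(n-i))"
    using b by auto
qed

lemma factor_z:
  assumes "is_form (Suc n) f" "f x0 z0 = 0" "z0 \<noteq> 0"
  shows "\<exists>R. is_form n R \<and> (\<forall>x z. f x z = (z0*x - x0*z) * R x z)"
proof -
  define N where "N = Suc n"
  obtain b where b: "\<forall>x z. f x z = (\<Sum>i\<le>N. b i * x^i * z^(N-i))"
    using assms(1) unfolding is_form_def N_def by blast
  define c where "c i k = b i * z0^(N-i) * x0^(i - Suc k) * z0^k" for i k
  define R where "R x z = (1/z0^N) * (\<Sum>i\<le>N. \<Sum>k<i. c i k * x^k * z^(n-k))" for x z
  have "is_form n R"
  proof -
    have "is_form n (\<lambda>x z. \<Sum>i\<le>N. \<Sum>k<i. c i k * x^k * z^(n-k))"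
      by (rule is_form_sum) (auto intro!: is_form_sum is_form_monom simp: N_def)
    then show ?thesis unfolding R_def by (rule is_form_scale)
  qed
  moreover have "f x z = (z0*x - x0*z) * R x z" for x z
  proof -
    have t: "z0^N * (x^i * z^(N-i)) - z^N * (x0^i * z0^(N-i))
          = (z0*x - x0*z) * (\<Sum>k<i. c' k * x^k * z^(n-k))"
      if "i \<le> N" "\<And>k. c' k = z0^(N-i) * x0^(i - Suc k) * z0^k" for i c'
    proof -
      have "z0^N * (x^i * z^(N-i)) - z^N * (x0^i * z0^(N-i))
          = (z*z0)^(N-i) * ((x*z0)^i - (x0*z)^i)"
      proof -
        have "z0^N = z0^(N-i) * z0^i" "z^N = z^(N-i) * z^i"
          using that(1) by (simp_all add: power_add[symmetric])
        then show ?thesis by (simp add: power_mult_distrib algebra_simps)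
      qed
      also have "\<dots> = (z*z0)^(N-i) * ((x*z0 - x0*z) * (\<Sum>k<i. (x0*z)^(i - Suc k) * (x*z0)^k))"
        by (simp add: power_diff_sumr2)
      also have "\<dots> = (z0*x - x0*z) * (\<Sum>k<i. (z*z0)^(N-i) * ((x0*z)^(i - Suc k) * (x*z0)^k))"
        by (simp add: sum_distrib_left algebra_simps)
      also have "(\<Sum>k<i. (z*z0)^(N-i) * ((x0*z)^(i - Suc k) * (x*z0)^k)) = (\<Sum>k<i. c' k * x^k * z^(n-k))"
      proof (rule sum.cong)
        fix k assume "k \<in> {..<i}"
        then have ki: "k < i" by simp
        have e: "z^(N-i) * z^(i - Suc k) = z^(n-k)"
          using ki that(1) by (simp add: power_add[symmetric] N_def)
        have "(z*z0)^(N-i) * ((x0*z)^(i - Suc k) * (x*z0)^k)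
            = (z0^(N-i) * x0^(i - Suc k) * z0^k) * x^k * (z^(N-i) * z^(i - Suc k))"
          by (simp add: power_mult_distrib algebra_simps)
        also have "\<dots> = c' k * x^k * z^(n-k)" using e that(2) by simp
        finally show "(z*z0)^(N-i) * ((x0*z)^(i - Suc k) * (x*z0)^k) = c' k * x^k * z^(n-k)" .
      qed simp
      finally show ?thesis .
    qed
    have "z0^N * f x z = z0^N * f x z - z^N * f x0 z0" using assms(2) by simp
    also have "\<dots> = (\<Sum>i\<le>N. b i * (z0^N * (x^i * z^(N-i)) - z^N * (x0^i * z0^(N-i))))"
      using b by (simp add: sum_distrib_left sum_subtractf algebra_simps)
    also have "\<dots> = (\<Sum>i\<le>N. b i * ((z0*x - x0*z) * (\<Sum>k<i. (z0^(N-i) * x0^(i - Suc k) * z0^k) * x^k * z^(n-k))))"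
      by (rule sum.cong) (auto simp: t)
    also have "\<dots> = (z0*x - x0*z) * (\<Sum>i\<le>N. \<Sum>k<i. c i k * x^k * z^(n-k))"
      by (simp add: c_def sum_distrib_left algebra_simps)
    finally have "z0^N * f x z = (z0*x - x0*z) * (\<Sum>i\<le>N. \<Sum>k<i. c i k * x^k * z^(n-k))" .
    then show ?thesis using assms(3) by (simp add: R_def field_simps)
  qed
  ultimately show ?thesis by blast
qed

lemma factor_pt:
  assumes "is_form (Suc n) f" "f x0 z0 = 0" "(x0, z0) \<noteq> (0, 0)"
  shows "\<exists>R. is_form n R \<and> (\<forall>x z. f x z = (z0*x - x0*z) * R x z)"
proof (cases "z0 = 0")
  case False then show ?thesis using factor_z assms by blast
next
  case True
  then have x0: "x0 \<noteq> 0" using assms(3) by simp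
  have "is_form (Suc n) (\<lambda>x z. f z x)" using assms(1) by (rule is_form_swap)
  from factor_z[OF this, of x0 z0] assms(2) x0
  obtain R where R: "is_form n R" "\<forall>x z. f z x = (x0*x - z0*z) * R x z" by auto
  have "is_form n (\<lambda>x z. - 1 * R z x)" using is_form_scale[OF is_form_swap[OF R(1)]] .
  moreover have "\<forall>x z. f x z = (z0*x - x0*z) * (- 1 * R z x)"
    using R(2) by (auto simp: algebra_simps)
  ultimately show ?thesis by blast
qed

lemma form_roots:
  assumes "is_form n f" "\<forall>j<n. (X j, Z j) \<noteq> (0, 0) \<and> f (X j) (Z j) = 0"
    "\<forall>i<n. \<forall>j<n. i \<noteq> j \<longrightarrow> Z i * X j - X i * Z j \<noteq> 0"
  shows "\<exists>c. \<forall>x z. f x z = c * (\<Prod>j<n. Z j * x - X j * z)"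
  using assms
proof (induction n arbitrary: f)
  case 0
  then obtain b where "\<forall>x z. f x z = (\<Sum>i\<le>0. b i * x^i * z^(0-i))" unfolding is_form_def by blast
  then show ?case by auto
next
  case (Suc n)
  obtain R where R: "is_form n R" "\<forall>x z. f x z = (Z n * x - X n * z) * R x z"
    using factor_pt[OF Suc.prems(1), of "X n" "Z n"] Suc.prems(2) by auto
  have "\<forall>j<n. (X j, Z j) \<noteq> (0, 0) \<and> R (X j) (Z j) = 0"
  proof (intro allI impI)
    fix j assume j: "j < n"
    have "Z n * X j - X n * Z j \<noteq> 0" using Suc.prems(3) j by auto
    moreover have "f (X j) (Z j) = 0" "(X j, Z j) \<noteq> (0, 0)" using Suc.prems(2) j by auto
    ultimately show "(X j, Z j) \<noteq> (0, 0) \<and> R (X j) (Z j) = 0" using R(2) by auto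
  qed
  moreover have "\<forall>i<n. \<forall>j<n. i \<noteq> j \<longrightarrow> Z i * X j - X i * Z j \<noteq> 0" using Suc.prems(3) by auto
  ultimately obtain c where c: "\<forall>x z. R x z = c * (\<Prod>j<n. Z j * x - X j * z)"
    using Suc.IH[OF R(1)] by blast
  show ?case by (rule exI[of _ c]) (simp add: R(2) c algebra_simps)
qed

lemma cube_root: "\<exists>r::complex. r^3 = a"
proof (cases "a = 0")
  case True then show ?thesis by auto
next
  case False
  have "exp (Ln a / 3) ^ 3 = exp (of_nat 3 * (Ln a / 3))" by (rule exp_of_nat_mult[symmetric])
  also have "\<dots> = a" using False by simp
  finally show ?thesis by blast
qed

lemma secant_lin:
  fixes q0 q1 q2 q3 :: complex
  defines "k0 \<equiv> q1*q3 - q2^2" and "k1 \<equiv> q1*q2 - q0*q3" and "k2 \<equiv> q0*q2 - q1^2"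
  assumes D: "k1^2 - 4*k0*k2 \<noteq> 0"
  shows "\<exists>a b X1 Z1 X2 Z2. q0 = a*Z1^3 + b*Z2^3 \<and> q1 = a*X1*Z1^2 + b*X2*Z2^2
     \<and> q2 = a*X1^2*Z1 + b*X2^2*Z2 \<and> q3 = a*X1^3 + b*X2^3"
proof -
  have R0: "k0*q0 + k1*q1 + k2*q2 = 0" unfolding k0_def k1_def k2_def by algebra
  have R1: "k0*q1 + k1*q2 + k2*q3 = 0" unfolding k0_def k1_def k2_def by algebra
  show ?thesis
  proof (cases "k2 = 0")
    case True
    then have k1: "k1 \<noteq> 0" using D by simp
    have "k1*q1 = -(k0*q0)" using R0 True by (simp add: eq_neg_iff_add_eq_0 add.commute)
    then have e1: "q1 = - k0*q0/k1" using k1 by (simp add: field_simps)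
    have e2: "q2 = k0^2*q0/k1^2" using R1 True k1 e1 by (simp add: field_simps power2_eq_square)
    show ?thesis
      apply (rule exI[of _ "q0/k1^3"], rule exI[of _ "q3 + k0^3*q0/k1^3"])
      apply (rule exI[of _ "-k0"], rule exI[of _ "k1"], rule exI[of _ 1], rule exI[of _ 0])
      using k1 e1 e2 by (simp add: field_simps power2_eq_square power3_eq_cube)
  next
    case False
    obtain d where d: "d^2 = k1^2 - 4*k0*k2" using power2_csqrt by blast
    have d0: "d \<noteq> 0" using d D by auto
    define t1 where "t1 = (-k1 + d)/(2*k2)"
    define t2 where "t2 = (-k1 - d)/(2*k2)"
    have dt: "t1 - t2 = d/k2" unfolding t1_def t2_def using False by (simp add: field_simps)
    have dt0: "t1 - t2 \<noteq> 0" using dt d0 False by simp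
    have r1: "k2*t1^2 = -(k1*t1 + k0)"
    proof -
      have u: "2*k2*t1 = d - k1" unfolding t1_def using False by (simp add: field_simps)
      have "4*k2*(k2*t1^2 + k1*t1 + k0) = (2*k2*t1)^2 + 2*k1*(2*k2*t1) + 4*k0*k2"
        by (simp add: algebra_simps power2_eq_square)
      also have "\<dots> = (d - k1)^2 + 2*k1*(d - k1) + 4*k0*k2" by (simp only: u)
      also have "\<dots> = d^2 - (k1^2 - 4*k0*k2)" by (simp add: algebra_simps power2_eq_square)
      also have "\<dots> = 0" using d by simp
      finally have "k2*t1^2 + k1*t1 + k0 = 0" using False by simp
      then have "(k1*t1 + k0) + k2*t1^2 = 0" by (simp add: algebra_simps)
      then show ?thesis by (simp only: add_eq_0_iff)
    qed
    have r2: "k2*t2^2 = -(k1*t2 + k0)"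
    proof -
      have u: "2*k2*t2 = -d - k1" unfolding t2_def using False by (simp add: field_simps)
      have "4*k2*(k2*t2^2 + k1*t2 + k0) = (2*k2*t2)^2 + 2*k1*(2*k2*t2) + 4*k0*k2"
        by (simp add: algebra_simps power2_eq_square)
      also have "\<dots> = (-d - k1)^2 + 2*k1*(-d - k1) + 4*k0*k2" by (simp only: u)
      also have "\<dots> = d^2 - (k1^2 - 4*k0*k2)" by (simp add: algebra_simps power2_eq_square)
      also have "\<dots> = 0" using d by simp
      finally have "k2*t2^2 + k1*t2 + k0 = 0" using False by simp
      then have "(k1*t2 + k0) + k2*t2^2 = 0" by (simp add: algebra_simps)
      then show ?thesis by (simp only: add_eq_0_iff)
    qed
    define a where "a = (q1 - t2*q0)/(t1 - t2)"
    define b where "b = (t1*q0 - q1)/(t1 - t2)"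
    have "a + b = (q0*(t1-t2))/(t1-t2)" unfolding a_def b_def
      by (simp add: add_divide_distrib[symmetric] algebra_simps)
    then have s0: "q0 = a + b" using dt0 by simp
    have "a*t1 + b*t2 = (q1*(t1-t2))/(t1-t2)" unfolding a_def b_def
      by (simp add: times_divide_eq_left add_divide_distrib[symmetric] algebra_simps)
    then have s1: "q1 = a*t1 + b*t2" using dt0 by simp
    have R0': "k2*q2 = -(k0*q0 + k1*q1)" using R0 by (simp only: add_eq_0_iff)
    have R1': "k2*q3 = -(k0*q1 + k1*q2)" using R1 by (simp only: add_eq_0_iff)
    have "k2*(a*t1^2 + b*t2^2) = a*(k2*t1^2) + b*(k2*t2^2)" by (simp add: algebra_simps)
    also have "\<dots> = -(k0*(a+b) + k1*(a*t1+b*t2))" unfolding r1 r2 by (simp add: algebra_simps)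
    also have "\<dots> = k2*q2" unfolding R0' by (simp add: s0 s1)
    finally have s2: "q2 = a*t1^2 + b*t2^2" using False by simp
    have "k2*(a*t1^3 + b*t2^3) = a*t1*(k2*t1^2) + b*t2*(k2*t2^2)" by (simp add: algebra_simps power2_eq_square power3_eq_cube)
    also have "\<dots> = -(k0*(a*t1+b*t2) + k1*(a*t1^2+b*t2^2))" unfolding r1 r2 by (simp add: algebra_simps power2_eq_square)
    also have "\<dots> = k2*q3" unfolding R1' by (simp add: s1 s2)
    finally have s3: "q3 = a*t1^3 + b*t2^3" using False by simp
    show ?thesis
      apply (rule exI[of _ a], rule exI[of _ b], rule exI[of _ t1], rule exI[of _ 1], rule exI[of _ t2], rule exI[of _ 1])
      using s0 s1 s2 s3 by simp
  qed
qed

lemma secant: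
  fixes q0 q1 q2 q3 :: complex
  assumes D: "(q1*q2 - q0*q3)^2 - 4*(q1*q3 - q2^2)*(q0*q2 - q1^2) \<noteq> 0"
  shows "\<exists>x1 z1 x2 z2. q0 = z1^3 + z2^3 \<and> q1 = x1*z1^2 + x2*z2^2
     \<and> q2 = x1^2*z1 + x2^2*z2 \<and> q3 = x1^3 + x2^3"
proof -
  obtain a b X1 Z1 X2 Z2 where e: "q0 = a*Z1^3 + b*Z2^3" "q1 = a*X1*Z1^2 + b*X2*Z2^2"
     "q2 = a*X1^2*Z1 + b*X2^2*Z2" "q3 = a*X1^3 + b*X2^3"
    using secant_lin[OF D] by blast
  obtain r where r: "r^3 = a" using cube_root by blast
  obtain s where s: "s^3 = b" using cube_root by blast
  show ?thesis
    apply (rule exI[of _ "r*X1"], rule exI[of _ "r*Z1"], rule exI[of _ "s*X2"], rule exI[of _ "s*Z2"])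
    using e r s by (simp add: power_mult_distrib power2_eq_square power3_eq_cube algebra_simps)
qed

lemma exhaust_5:
  fixes x :: 5
  shows "x = 1 \<or> x = 2 \<or> x = 3 \<or> x = 4 \<or> x = 5"
proof (induct x)
  case (of_int z)
  then have "z = 0 \<or> z = 1 \<or> z = 2 \<or> z = 3 \<or> z = 4" by fastforce
  then show ?case by auto
qed

lemma vec5_eq: "(v::'a^5) = w \<longleftrightarrow> v$1 = w$1 \<and> v$2 = w$2 \<and> v$3 = w$3 \<and> v$4 = w$4 \<and> v$5 = w$5"
proof
  assume "v = w" then show "v$1 = w$1 \<and> v$2 = w$2 \<and> v$3 = w$3 \<and> v$4 = w$4 \<and> v$5 = w$5" by simp
next
  assume h: "v$1 = w$1 \<and> v$2 = w$2 \<and> v$3 = w$3 \<and> v$4 = w$4 \<and> v$5 = w$5"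
  show "v = w" unfolding vec_eq_iff
  proof
    fix i :: 5
    from exhaust_5[of i] h show "v$i = w$i" by auto
  qed
qed

lemma emb_comp [simp]: "emb x z y $ 1 = z^3" "emb x z y $ 2 = x*z^2" "emb x z y $ 3 = x^2*z"
  "emb x z y $ 4 = x^3" "emb x z y $ 5 = y"
  by (simp_all add: emb_def vector_def)

definition l3 :: "complex \<Rightarrow> complex \<Rightarrow> complex \<Rightarrow> complex \<Rightarrow> complex \<Rightarrow> complex \<Rightarrow> complex^5 \<Rightarrow> complex" where
  "l3 A0 B0 A1 B1 A2 B2 v = - A0*A1*A2 * v$1 + (A0*A1*B2 + A0*B1*A2 + B0*A1*A2) * v$2
     - (A0*B1*B2 + B0*A1*B2 + B0*B1*A2) * v$3 + B0*B1*B2 * v$4"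

definition g3 :: "complex \<Rightarrow> complex \<Rightarrow> complex \<Rightarrow> complex \<Rightarrow> complex \<Rightarrow> complex \<Rightarrow> complex \<Rightarrow> complex \<Rightarrow> complex" where
  "g3 A0 B0 A1 B1 A2 B2 x z = (B0*x - A0*z)*(B1*x - A1*z)*(B2*x - A2*z)"

lemma l3_emb: "l3 A0 B0 A1 B1 A2 B2 (emb x z y) = g3 A0 B0 A1 B1 A2 B2 x z"
  unfolding l3_def g3_def by (simp add: algebra_simps power2_eq_square power3_eq_cube)

lemma l3_lin: "l3 A0 B0 A1 B1 A2 B2 (c1 *s u + c2 *s v + c3 *s w)
   = c1 * l3 A0 B0 A1 B1 A2 B2 u + c2 * l3 A0 B0 A1 B1 A2 B2 v + c3 * l3 A0 B0 A1 B1 A2 B2 w"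
proof -
  have add: "l3 A0 B0 A1 B1 A2 B2 (u' + v') = l3 A0 B0 A1 B1 A2 B2 u' + l3 A0 B0 A1 B1 A2 B2 v'" for u' v'
    unfolding l3_def by (simp add: ring_distribs)
  have sm: "l3 A0 B0 A1 B1 A2 B2 (c *s u') = c * l3 A0 B0 A1 B1 A2 B2 u'" for c u'
    unfolding l3_def by (simp add: algebra_simps)
  show ?thesis by (simp only: add sm)
qed

lemma l3_two:
  assumes "w$1 = z1^3 + z2^3" "w$2 = x1*z1^2 + x2*z2^2" "w$3 = x1^2*z1 + x2^2*z2" "w$4 = x1^3 + x2^3"
  shows "l3 A0 B0 A1 B1 A2 B2 w = g3 A0 B0 A1 B1 A2 B2 x1 z1 + g3 A0 B0 A1 B1 A2 B2 x2 z2"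
  unfolding l3_def g3_def assms by (simp add: algebra_simps power2_eq_square power3_eq_cube)

definition Dfun :: "'a::comm_ring_1 \<Rightarrow> 'a \<Rightarrow> 'a \<Rightarrow> 'a \<Rightarrow> 'a" where
  "Dfun q0 q1 q2 q3 = (q1*q2 - q0*q3)^2 - 4*(q1*q3 - q2^2)*(q0*q2 - q1^2)"

definition Dv :: "complex^5 \<Rightarrow> complex" where
  "Dv v = Dfun (v$1) (v$2) (v$3) (v$4)"

lemma Dfun_hom: "Dfun (c*x0) (c*x1) (c*x2) (c*x3) = c^4 * Dfun x0 x1 x2 x3"
  unfolding Dfun_def by (simp add: algebra_simps power2_eq_square power4_eq_xxxx)

lemma hlp: "(- a*b*u*W)^2 - 4*(a*b*x*x'*W)*(a*b*z*z'*W) = (a*b)^2*W^2*(u^2 - 4*x*x'*z*z')"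
  for a b u W x x' z z' :: "'a::comm_ring_1"
  by (simp add: power2_eq_square algebra_simps)

lemma Dfun_two: "Dfun (al*z^3 + be*z'^3) (al*x*z^2 + be*x'*z'^2) (al*x^2*z + be*x'^2*z') (al*x^3 + be*x'^3)
   = (al*be)^2 * (x*z' - x'*z)^6"
proof -
  let ?q0 = "al*z^3 + be*z'^3" and ?q1 = "al*x*z^2 + be*x'*z'^2" and ?q2 = "al*x^2*z + be*x'^2*z'"
    and ?q3 = "al*x^3 + be*x'^3" and ?d = "x*z' - x'*z"
  have k2: "?q0*?q2 - ?q1^2 = al*be*z*z'*?d^2" by (simp add: algebra_simps power2_eq_square power3_eq_cube)
  have k1: "?q1*?q2 - ?q0*?q3 = - al*be*(x*z' + x'*z)*?d^2" by (simp add: algebra_simps power2_eq_square power3_eq_cube)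
  have k0: "?q1*?q3 - ?q2^2 = al*be*x*x'*?d^2" by (simp add: algebra_simps power2_eq_square power3_eq_cube)
  have "Dfun ?q0 ?q1 ?q2 ?q3 = (- al*be*(x*z' + x'*z)*?d^2)^2 - 4*(al*be*x*x'*?d^2)*(al*be*z*z'*?d^2)"
    unfolding Dfun_def k0 k1 k2 ..
  also have "\<dots> = (al*be)^2 * (?d^2)^2 * ((x*z' + x'*z)^2 - 4*x*x'*z*z')"
    by (rule hlp)
  also have "(x*z' + x'*z)^2 - 4*x*x'*z*z' = ?d^2" by (simp add: algebra_simps power2_eq_square)
  finally have fin: "Dfun ?q0 ?q1 ?q2 ?q3 = (al*be)^2 * (?d^2)^2 * ?d^2" .
  have e: "(al*be)^2 * (?d^2)^2 * ?d^2 = (al*be)^2 * ?d^6"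
  proof -
    have "(?d^2)^2 * ?d^2 = ?d^6" by (simp only: power_mult[symmetric] power_add[symmetric]) simp
    then show ?thesis by (simp only: mult.assoc)
  qed
  show ?thesis unfolding fin e ..
qed

lemma poly_Dfun: "poly (Dfun p0 p1 p2 p3) t = Dfun (poly p0 t) (poly p1 t) (poly p2 t) (poly p3 t)"
  unfolding Dfun_def by (simp only: poly_diff poly_mult poly_power) simp

lemma sc: "(ep *\<^sub>R v)$i = of_real ep * (v$i :: complex)"
  unfolding vector_scaleR_component by (simp add: scaleR_conv_of_real)

lemma sc2: "ep *\<^sub>R (c::complex) = of_real ep * c"
  by (simp add: scaleR_conv_of_real)

lemma l3_addsc: "l3 A0 B0 A1 B1 A2 B2 (w + ep *\<^sub>R vs) = l3 A0 B0 A1 B1 A2 B2 w + of_real ep * l3 A0 B0 A1 B1 A2 B2 vs"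
  unfolding l3_def by (simp add: sc2 algebra_simps)

definition Ssum :: "(nat \<Rightarrow> complex) \<Rightarrow> (complex^5) set" where
  "Ssum a = {u + v | u v. u \<in> curve_cone a \<and> v \<in> curve_cone a}"

lemma secant_S:
  assumes F: "\<forall>x z. sext a x z = c * g3 A0 B0 A1 B1 A2 B2 x z * g3 A3 B3 A4 B4 A5 B5 x z"
    and g: "l3 A0 B0 A1 B1 A2 B2 w = 0" and h: "l3 A3 B3 A4 B4 A5 B5 w = 0"
    and w5: "w$5 = 0" and D: "Dv w \<noteq> 0"
  shows "w \<in> Ssum a"
proof -
  obtain x1 z1 x2 z2 where e: "w$1 = z1^3 + z2^3" "w$2 = x1*z1^2 + x2*z2^2"
     "w$3 = x1^2*z1 + x2^2*z2" "w$4 = x1^3 + x2^3"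
    using secant[of "w$2" "w$3" "w$1" "w$4"] D unfolding Dv_def Dfun_def by blast
  have G: "g3 A0 B0 A1 B1 A2 B2 x1 z1 = - g3 A0 B0 A1 B1 A2 B2 x2 z2"
    using g l3_two[OF e, of A0 B0 A1 B1 A2 B2] by (simp add: eq_neg_iff_add_eq_0)
  have H: "g3 A3 B3 A4 B4 A5 B5 x1 z1 = - g3 A3 B3 A4 B4 A5 B5 x2 z2"
    using h l3_two[OF e, of A3 B3 A4 B4 A5 B5] by (simp add: eq_neg_iff_add_eq_0)
  have FF: "sext a x1 z1 = sext a x2 z2" using F G H by simp
  define y where "y = csqrt (sext a x1 z1)"
  have y2: "y^2 = sext a x1 z1" unfolding y_def by simp
  have u: "emb x1 z1 y \<in> curve_cone a" unfolding curve_cone_def using y2 by blast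
  have v: "emb x2 z2 (-y) \<in> curve_cone a" unfolding curve_cone_def using y2 FF by fastforce
  have "w = emb x1 z1 y + emb x2 z2 (-y)"
    unfolding vec5_eq using e w5 by simp
  then show ?thesis unfolding Ssum_def using u v by blast
qed

lemma closure_M:
  assumes F: "\<forall>x z. sext a x z = c * g3 A0 B0 A1 B1 A2 B2 x z * g3 A3 B3 A4 B4 A5 B5 x z"
    and g: "l3 A0 B0 A1 B1 A2 B2 w = 0" and h: "l3 A3 B3 A4 B4 A5 B5 w = 0" and w5: "w$5 = 0"
    and gs: "l3 A0 B0 A1 B1 A2 B2 vs = 0" and hs: "l3 A3 B3 A4 B4 A5 B5 vs = 0" and vs5: "vs$5 = 0"
    and Ds: "Dv vs \<noteq> 0"
  shows "w \<in> closure (Ssum a)"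
proof -
  define Q where "Q = Dfun [:vs$1, w$1:] [:vs$2, w$2:] [:vs$3, w$3:] [:vs$4, w$4:]"
  have "poly Q 0 = Dv vs" by (simp add: Q_def poly_Dfun Dv_def)
  then have "Q \<noteq> 0" using Ds by auto
  then have fin: "finite {t. poly Q t = 0}" by (rule poly_roots_finite)
  have key: "w + ep *\<^sub>R vs \<in> Ssum a" if ep: "ep \<noteq> 0" "poly Q (1 / of_real ep) \<noteq> 0" for ep :: real
  proof -
    define e where "e = (of_real ep :: complex)"
    have e0: "e \<noteq> 0" using ep unfolding e_def by simp
    have "Dv (w + ep *\<^sub>R vs) = Dfun (e*(vs$1 + (1/e)*w$1)) (e*(vs$2 + (1/e)*w$2)) (e*(vs$3 + (1/e)*w$3)) (e*(vs$4 + (1/e)*w$4))"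
      unfolding Dv_def using e0 by (simp add: sc2 e_def[symmetric] algebra_simps)
    also have "\<dots> = e^4 * poly Q (1/e)"
      unfolding Dfun_hom by (simp add: Q_def poly_Dfun algebra_simps)
    finally have "Dv (w + ep *\<^sub>R vs) \<noteq> 0" using e0 ep(2) unfolding e_def by simp
    moreover have "l3 A0 B0 A1 B1 A2 B2 (w + ep *\<^sub>R vs) = 0" "l3 A3 B3 A4 B4 A5 B5 (w + ep *\<^sub>R vs) = 0"
      using g h gs hs by (simp_all add: l3_addsc)
    moreover have "(w + ep *\<^sub>R vs)$5 = 0" using w5 vs5 by simp
    ultimately show ?thesis using secant_S[OF F] by blast
  qed
  show ?thesis unfolding closure_approachable
  proof (intro allI impI)
    fix r :: real assume r: "r > 0"
    define N where "N = norm vs + 1"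
    have N: "N > 0" unfolding N_def by (simp add: add_nonneg_pos)
    define ep where "ep n = r / (2 * N * (real n + 1))" for n :: nat
    have ep0: "ep n > 0" for n unfolding ep_def using r N by simp
    define hh where "hh n = (1 / of_real (ep n) :: complex)" for n
    have "inj hh"
    proof (rule injI)
      fix m n assume "hh m = hh n"
      then have "ep m = ep n" unfolding hh_def by simp
      then show "m = n" unfolding ep_def using r N by (simp add: field_simps)
    qed
    then have "finite (hh -` {t. poly Q t = 0})" using fin finite_vimageI by blast
    then obtain n where n: "n \<notin> hh -` {t. poly Q t = 0}"
      using ex_new_if_finite[OF infinite_UNIV_nat] by blast
    have mem: "w + ep n *\<^sub>R vs \<in> Ssum a" using key[of "ep n"] ep0[of n] n unfolding hh_def by auto
    have "dist (w + ep n *\<^sub>R vs) w = ep n * norm vs" using ep0[of n] by (simp add: dist_norm)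
    also have "\<dots> \<le> ep n * N" using ep0[of n] unfolding N_def by simp
    also have "\<dots> = r / (2 * (real n + 1))" unfolding ep_def using N by simp
    also have "\<dots> < r" using r by (simp add: field_simps add_pos_nonneg)
    finally show "\<exists>y\<in>Ssum a. dist y w < r" using mem by blast
  qed
qed

theorem mainTheorem12:
  fixes a :: "nat \<Rightarrow> complex" and p :: "nat \<Rightarrow> complex ^ 5"
  assumes "genus2_coeffs a"
    and "\<forall>i<6. weierstrass_vec a (p i)"
    and "\<forall>i<6. \<forall>j<6. i \<noteq> j \<longrightarrow> proj_distinct (p i) (p j)"
  shows "cspan3 (p 0) (p 1) (p 2) \<inter> cspan3 (p 3) (p 4) (p 5) \<subseteq> W' a"
proof -
  have wv: "\<forall>i<6. \<exists>x z. p i = emb x z 0 \<and> sext a x z = 0 \<and> (x, z) \<noteq> (0, 0)"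
  proof (intro allI impI)
    fix i :: nat assume i: "i < 6"
    then have W: "weierstrass_vec a (p i)" using assms(2) by blast
    then obtain x z y where e: "p i = emb x z y" "y^2 = sext a x z"
      unfolding weierstrass_vec_def curve_cone_def by blast
    have y: "y = 0" using W e(1) unfolding weierstrass_vec_def plus_hyperplane_def by simp
    have "(x, z) \<noteq> (0, 0)"
    proof
      assume "(x, z) = (0, 0)"
      then have "p i = 0" using e(1) y unfolding vec5_eq by simp
      then show False using W unfolding weierstrass_vec_def by simp
    qed
    then show "\<exists>x z. p i = emb x z 0 \<and> sext a x z = 0 \<and> (x, z) \<noteq> (0, 0)"
      using e y by auto
  qed
  have "\<exists>X. \<forall>i. \<exists>z. i < 6 \<longrightarrow> p i = emb (X i) z 0 \<and> sext a (X i) z = 0 \<and> (X i, z) \<noteq> (0, 0)"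
    by (rule choice) (use wv in blast)
  then obtain X where X: "\<forall>i. \<exists>z. i < 6 \<longrightarrow> p i = emb (X i) z 0 \<and> sext a (X i) z = 0 \<and> (X i, z) \<noteq> (0, 0)"
    by blast
  have "\<exists>Z. \<forall>i. i < 6 \<longrightarrow> p i = emb (X i) (Z i) 0 \<and> sext a (X i) (Z i) = 0 \<and> (X i, Z i) \<noteq> (0, 0)"
    by (rule choice) (use X in blast)
  then obtain Z where P: "\<forall>i<6. p i = emb (X i) (Z i) 0 \<and> sext a (X i) (Z i) = 0 \<and> (X i, Z i) \<noteq> (0, 0)"
    by blast
  have dist: "\<forall>i<6. \<forall>j<6. i \<noteq> j \<longrightarrow> Z i * X j - X i * Z j \<noteq> 0"
  proof (intro allI impI notI)
    fix i j :: nat assume i: "i < 6" and j: "j < 6" and ij: "i \<noteq> j" and eq: "Z i * X j - X i * Z j = 0"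
    have eq': "Z i * X j = X i * Z j" using eq by simp
    have nz: "(X i, Z i) \<noteq> (0, 0)" using P i by blast
    obtain s where s: "X j = s * X i" "Z j = s * Z i"
    proof (cases "X i = 0")
      case True
      then have "Z i \<noteq> 0" using nz by simp
      moreover have "X j = 0" using eq' True \<open>Z i \<noteq> 0\<close> by simp
      ultimately show ?thesis using that[of "Z j / Z i"] True by simp
    next
      case False
      have "Z j = (X j / X i) * Z i" using eq' False by (simp add: field_simps)
      then show ?thesis using that[of "X j / X i"] False by simp
    qed
    have "p j = s^3 *s p i"
      using P i j s unfolding vec5_eq by (simp add: power_mult_distrib power2_eq_square power3_eq_cube algebra_simps)
    then show False using assms(3) i j ij unfolding proj_distinct_def by blast
  qed
  have "is_form 6 (sext a)" unfolding is_form_def sext_def by blast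
  moreover have "\<forall>j<6. (X j, Z j) \<noteq> (0, 0) \<and> sext a (X j) (Z j) = 0" using P by blast
  ultimately obtain c where c: "\<forall>x z. sext a x z = c * (\<Prod>j<6. Z j * x - X j * z)"
    using form_roots[of 6 "sext a" X Z] dist by blast
  have F: "\<forall>x z. sext a x z = c * g3 (X 0) (Z 0) (X 1) (Z 1) (X 2) (Z 2) x z
      * g3 (X 3) (Z 3) (X 4) (Z 4) (X 5) (Z 5) x z"
    using c by (simp add: g3_def eval_nat_numeral prod.lessThan_Suc ac_simps)
  let ?g = "l3 (X 0) (Z 0) (X 1) (Z 1) (X 2) (Z 2)"
  let ?h = "l3 (X 3) (Z 3) (X 4) (Z 4) (X 5) (Z 5)"
  have pe: "p i = emb (X i) (Z i) 0" if "i < 6" for i using P that by blast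
  have g0: "?g (p 0) = 0" "?g (p 1) = 0" "?g (p 2) = 0"
    by (simp_all add: pe l3_emb g3_def)
  have h0: "?h (p 3) = 0" "?h (p 4) = 0" "?h (p 5) = 0"
    by (simp_all add: pe l3_emb g3_def)
  have p5: "p i $ 5 = 0" if "i < 6" for i using pe[OF that] by simp
  define H0 where "H0 = g3 (X 3) (Z 3) (X 4) (Z 4) (X 5) (Z 5) (X 0) (Z 0)"
  define H1 where "H1 = g3 (X 3) (Z 3) (X 4) (Z 4) (X 5) (Z 5) (X 1) (Z 1)"
  have hp0: "?h (p 0) = H0" "?h (p 1) = H1" unfolding H0_def H1_def by (simp_all add: pe l3_emb)
  have H0nz: "H0 \<noteq> 0" unfolding H0_def g3_def using dist by simp
  have H1nz: "H1 \<noteq> 0" unfolding H1_def g3_def using dist by simp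
  have d01: "X 0 * Z 1 - X 1 * Z 0 \<noteq> 0" using dist[rule_format, of 1 0] by (simp add: ac_simps)
  define vs where "vs = H1 *s p 0 + (- H0) *s p 1 + 0 *s p 2"
  have gs: "?g vs = 0" unfolding vs_def l3_lin g0 by simp
  have hs: "?h vs = 0" unfolding vs_def l3_lin hp0 by simp
  have vs5: "vs $ 5 = 0" unfolding vs_def using p5 by simp
  have "Dv vs = Dfun (H1*Z 0^3 + (-H0)*Z 1^3) (H1*X 0*Z 0^2 + (-H0)*X 1*Z 1^2)
      (H1*X 0^2*Z 0 + (-H0)*X 1^2*Z 1) (H1*X 0^3 + (-H0)*X 1^3)"
    unfolding Dv_def vs_def by (simp add: pe mult.assoc)
  also have "\<dots> = (H1 * (-H0))^2 * (X 0 * Z 1 - X 1 * Z 0)^6" by (rule Dfun_two)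
  finally have Ds: "Dv vs \<noteq> 0" using H0nz H1nz d01 by simp
  show ?thesis
  proof
    fix v assume v: "v \<in> cspan3 (p 0) (p 1) (p 2) \<inter> cspan3 (p 3) (p 4) (p 5)"
    then obtain c1 c2 c3 where v1: "v = c1 *s p 0 + c2 *s p 1 + c3 *s p 2" unfolding cspan3_def by blast
    obtain d1 d2 d3 where v2: "v = d1 *s p 3 + d2 *s p 4 + d3 *s p 5" using v unfolding cspan3_def by blast
    have gv: "?g v = 0" unfolding v1 l3_lin g0 by simp
    have hv: "?h v = 0" unfolding v2 l3_lin h0 by simp
    have v5: "v $ 5 = 0" unfolding v1 using p5 by simp
    have "v \<in> closure (Ssum a)" by (rule closure_M[OF F gv hv v5 gs hs vs5 Ds])
    then show "v \<in> W' a" using v5 unfolding W'_def sec_cone_def Ssum_def plus_hyperplane_def by blast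
  qed
qed

end
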